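(* Let $n\ge 3$ and let $S=[A_0,\dots,A_n]$ be an $n$-pre-kite which is not a regular $n$-simplex. Then $S$ has at most two apexes.
   Context: An $n$-simplex is the convex hull of $n+1$ affinely independent points in a Euclidean space; its $j$-th facet $S_j$ is the $(n-1)$-simplex obtained by removing the vertex $A_j$. An $n$-simplex is an $n$-pre-kite if at least one facet $S_j$ is a regular $(n-1)$-simplex (all edges of equal length); the corresponding vertex $A_j$ is called an apex. *)

theory Defs
  imports "HOL-Analysis.Analysis"
begin

definition is_simplex :: "nat \<Rightarrow> (nat \<Rightarrow> 'a::euclidean_space) \<Rightarrow> bool" where
  "is_simplex n A \<longleftrightarrow> inj_on A {0..n} \<and> \<not> affine_dependent (A ` {0..n})"

definition regular_on :: "nat set \<Rightarrow> (nat \<Rightarrow> 'a::euclidean_space) \<Rightarrow> bool" where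
  "regular_on I A \<longleftrightarrow> (\<forall>i\<in>I. \<forall>j\<in>I. \<forall>k\<in>I. \<forall>l\<in>I.
      i \<noteq> j \<longrightarrow> k \<noteq> l \<longrightarrow> dist (A i) (A j) = dist (A k) (A l))"

definition is_apex :: "nat \<Rightarrow> (nat \<Rightarrow> 'a::euclidean_space) \<Rightarrow> nat \<Rightarrow> bool" where
  "is_apex n A j \<longleftrightarrow> j \<in> {0..n} \<and> regular_on ({0..n} - {j}) A"

definition is_pre_kite :: "nat \<Rightarrow> (nat \<Rightarrow> 'a::euclidean_space) \<Rightarrow> bool" where
  "is_pre_kite n A \<longleftrightarrow> is_simplex n A \<and> (\<exists>j. is_apex n A j)"

definition is_regular_simplex :: "nat \<Rightarrow> (nat \<Rightarrow> 'a::euclidean_space) \<Rightarrow> bool" where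
  "is_regular_simplex n A \<longleftrightarrow> is_simplex n A \<and> regular_on {0..n} A"

end

theory Submission
  imports Defs
begin

lemma two_in_rest:
  fixes n x y :: nat
  assumes "n \<ge> 3"
  obtains p q where "p \<in> {0..n}" "q \<in> {0..n}" "p \<noteq> q" "p \<noteq> x" "p \<noteq> y" "q \<noteq> x" "q \<noteq> y"
proof -
  have "card ({0..n} - {x, y}) \<ge> 2"
  proof -
    have "card ({0..n} - {x,y}) \<ge> card {0..n} - card {x,y}"
      by (rule diff_card_le_card_Diff) simp
    moreover have "card {x,y} \<le> 2" by (simp add: card_insert_le_m1)
    ultimately show ?thesis using assms by simp
  qed
  then obtain p B where B: "{0..n} - {x, y} = insert p B" "p \<notin> B" "Suc 0 \<le> card B"
    unfolding numeral_2_eq_2 card_le_Suc_iff by blast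
  then obtain q where "q \<in> B" by (metis card.empty ex_in_conv not_one_le_zero One_nat_def)
  then have "p \<in> {0..n} - {x, y}" "q \<in> {0..n} - {x, y}" "p \<noteq> q" using B by auto
  then show ?thesis using that by auto
qed

theorem lemma5p1:
  fixes A :: "nat \<Rightarrow> 'a::euclidean_space" and n :: nat
  assumes "n \<ge> 3"
    and "is_pre_kite n A"
    and "\<not> is_regular_simplex n A"
  shows "card {j. is_apex n A j} \<le> 2"
proof (rule ccontr)
  let ?S = "{j. is_apex n A j}"
  assume "\<not> card ?S \<le> 2"
  hence c: "card ?S \<ge> 3" by simp
  have fin: "finite ?S" by (rule finite_subset[of _ "{0..n}"]) (auto simp: is_apex_def)
  obtain a B where B: "?S = insert a B" "a \<notin> B" "Suc (Suc 0) \<le> card B"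
    using c unfolding numeral_3_eq_3 card_le_Suc_iff by blast
  obtain b C where C: "B = insert b C" "b \<notin> C" "Suc 0 \<le> card C"
    using B(3) unfolding card_le_Suc_iff by blast
  obtain c where "c \<in> C" using C(3) by (metis card.empty ex_in_conv not_one_le_zero One_nat_def)
  have "a \<in> ?S" "b \<in> ?S - {a}" "c \<in> ?S - {a} - {b}"
    using B C \<open>c \<in> C\<close> by auto
  have ap: "is_apex n A a" "is_apex n A b" "is_apex n A c" "a \<noteq> b" "a \<noteq> c" "b \<noteq> c"
    using \<open>a \<in> ?S\<close> \<open>b \<in> ?S - {a}\<close> \<open>c \<in> ?S - {a} - {b}\<close> by auto
  have avoid: "\<exists>x. is_apex n A x \<and> x \<noteq> i \<and> x \<noteq> j" for i j
  proof (cases "a \<noteq> i \<and> a \<noteq> j")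
    case True then show ?thesis using ap by blast
  next
    case f1: False show ?thesis
    proof (cases "b \<noteq> i \<and> b \<noteq> j")
      case True then show ?thesis using ap by blast
    next
      case False then show ?thesis using ap f1 by (intro exI[of _ c]) auto
    qed
  qed
  have reg: "regular_on {0..n} A"
    unfolding regular_on_def
  proof (intro ballI impI)
    fix i j k l assume ij: "i \<in> {0..n}" "j \<in> {0..n}" "k \<in> {0..n}" "l \<in> {0..n}" "i \<noteq> j" "k \<noteq> l"
    obtain x where x: "is_apex n A x" "x \<noteq> i" "x \<noteq> j" using avoid by blast
    obtain y where y: "is_apex n A y" "y \<noteq> k" "y \<noteq> l" using avoid by blast
    obtain p q where pq: "p \<in> {0..n}" "q \<in> {0..n}" "p \<noteq> q" "p \<noteq> x" "p \<noteq> y" "q \<noteq> x" "q \<noteq> y"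
      using two_in_rest[OF assms(1)] by blast
    have "dist (A i) (A j) = dist (A p) (A q)"
    proof -
      have r: "regular_on ({0..n} - {x}) A" using x(1) by (simp add: is_apex_def)
      show ?thesis
        by (rule r[unfolded regular_on_def, rule_format]) (use x pq ij in auto)
    qed
    also have "\<dots> = dist (A k) (A l)"
    proof -
      have r: "regular_on ({0..n} - {y}) A" using y(1) by (simp add: is_apex_def)
      show ?thesis
        by (rule r[unfolded regular_on_def, rule_format]) (use y pq ij in auto)
    qed
    finally show "dist (A i) (A j) = dist (A k) (A l)" .
  qed
  then show False using assms(2,3) by (simp add: is_regular_simplex_def is_pre_kite_def)
qed

end
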